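(* For every $(G,r,T,a,b)$ with $0\le a\le 1/2$ and $b\in[0,1]$, there is a coupling of the spread process $\{f_t(v)\}$ with parameters $(G,r,T,a,b)$ and the decoupled process $(g,Z,\mathrm{count},\mathrm{origin})$ with parameters $(G,r,T,\alpha=2a,\beta=b)$ such that $g_t(v)=f_t(v)$ for all $t\in\mathbb{N}$ and all $v\in V$.
   Context: Spread process. Fix $a,b\in[0,1]$. Let $G=(V,E)$ be a connected, locally finite, undirected graph, $r\in V$ a root, and $T$ a BFS spanning tree of $G$ rooted at $r$ (i.e. $d_T(r,v)=d_G(r,v)$ for all $v$), oriented away from $r$, with parent $p(v)$ for $v\ne r$. The spread process with parameters $(G,r,T,a,b)$ is the random sequence $f_t:V\to\{+1,-1,\bot\}$: $f_t(r)=+1$ for all $t$; $f_0(v)=\bot$ for $v\ne r$; for $t\ge1$ and each $v\ne r$ independently: if $f_{t-1}(v)=\bot\ne f_{t-1}(p(v))$ then $f_t(v)=f_{t-1}(p(v))$ w.p. $1-a$ and $-f_{t-1}(p(v))$ w.p. $a$; if $f_{t-1}(v)\ne\bot$ then $f_t(v)=f_{t-1}(p(v))$ w.p. $b$ and $f_{t-1}(v)$ w.p. $1-b$; if $f_{t-1}(v)=f_{t-1}(p(v))=\bot$ then $f_t(v)=\bot$. Decoupled process with parameters $(G,r,T,\alpha,\beta)$: $Z_0=+1$, $Z_1,Z_2,\dots$ i.i.d. uniform on $\{-1,+1\}$, $Z_\infty=\bot$; counter $\mathrm{count}_0=1$; $\mathrm{origin}_0(r)=0$, $\mathrm{origin}_0(v)=\infty$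 for $v\ne r$, and the root always has origin $0$; $g_t(v)=Z_{\mathrm{origin}_t(v)}$. Update from $t$ to $t+1$ (independent choices): if $g_t(v)=g_t(p(v))=\bot$ then $\mathrm{origin}_{t+1}(v)=\infty$; nodes with $g_t(v)=\bot\ne g_t(p(v))$ are processed sequentially: w.p. $1-\alpha$, $\mathrm{origin}_{t+1}(v)=\mathrm{origin}_t(p(v))$; w.p. $\alpha$, $\mathrm{origin}_{t+1}(v)$ is the current counter value, and the counter is then incremented; if $g_t(v)\ne\bot$, $v\ne r$, then w.p. $\beta$, $\mathrm{origin}_{t+1}(v)=\mathrm{origin}_t(p(v))$, else it is unchanged. *)

theory Defs
  imports "HOL-Probability.Probability"
begin

datatype sv = Plus | Minus | Bot

fun sv_neg :: "sv \<Rightarrow> sv" where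
  "sv_neg Plus = Minus" | "sv_neg Minus = Plus" | "sv_neg Bot = Bot"

definition gdist :: "('v \<Rightarrow> 'v \<Rightarrow> bool) \<Rightarrow> 'v \<Rightarrow> 'v \<Rightarrow> nat" where
  "gdist E u v = (LEAST n. (E ^^ n) u v)"

definition conn_lf_graph :: "('v \<Rightarrow> 'v \<Rightarrow> bool) \<Rightarrow> bool" where
  "conn_lf_graph E \<longleftrightarrow> (\<forall>u v. E u v \<longrightarrow> E v u) \<and> (\<forall>v. finite {w. E v w}) \<and> (\<forall>u v. E\<^sup>*\<^sup>* u v)"

text \<open>A BFS spanning tree of G rooted at r, oriented away from r, given by its parent map p:
  every v \<noteq> r is joined by a G-edge to its parent, which is one step closer to r in G.
  (The edges {v, p v} then form a spanning tree T with d_T(r,v) = d_G(r,v).)\<close>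
definition bfs_parent :: "('v \<Rightarrow> 'v \<Rightarrow> bool) \<Rightarrow> 'v \<Rightarrow> ('v \<Rightarrow> 'v) \<Rightarrow> bool" where
  "bfs_parent E r p \<longleftrightarrow> (\<forall>v. v \<noteq> r \<longrightarrow> E v (p v) \<and> gdist E r (p v) + 1 = gdist E r v)"

definition spread_init :: "'v \<Rightarrow> ('v \<Rightarrow> sv)" where
  "spread_init r = (\<lambda>v. if v = r then Plus else Bot)"

text \<open>Law of f_t(v) given f_{t-1} = f, for v \<noteq> r.\<close>
definition spread_vstep :: "real \<Rightarrow> real \<Rightarrow> ('v \<Rightarrow> 'v) \<Rightarrow> ('v \<Rightarrow> sv) \<Rightarrow> 'v \<Rightarrow> sv pmf" where
  "spread_vstep a b p f v =
     (if f v = Bot then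
        (if f (p v) = Bot then return_pmf Bot
         else map_pmf (\<lambda>c. if c then sv_neg (f (p v)) else f (p v)) (bernoulli_pmf a))
      else map_pmf (\<lambda>c. if c then f (p v) else f v) (bernoulli_pmf b))"

text \<open>One step: all non-root nodes update independently; nodes that are bottom with a
  bottom parent stay bottom (they form the default outside the finite set below).\<close>
definition spread_step :: "real \<Rightarrow> real \<Rightarrow> 'v \<Rightarrow> ('v \<Rightarrow> 'v) \<Rightarrow> ('v \<Rightarrow> sv) \<Rightarrow> ('v \<Rightarrow> sv) pmf" where
  "spread_step a b r p f =
     map_pmf (\<lambda>h. h(r := Plus))
       (Pi_pmf {v. v \<noteq> r \<and> (f v \<noteq> Bot \<or> f (p v) \<noteq> Bot)} Bot (spread_vstep a b p f))"

fun spread_traj :: "real \<Rightarrow> real \<Rightarrow> 'v \<Rightarrow> ('v \<Rightarrow> 'v) \<Rightarrow> nat \<Rightarrow> ('v \<Rightarrow> sv) list pmf" where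
  "spread_traj a b r p 0 = return_pmf [spread_init r]"
| "spread_traj a b r p (Suc n) =
     bind_pmf (spread_traj a b r p n)
       (\<lambda>fs. map_pmf (\<lambda>f. fs @ [f]) (spread_step a b r p (last fs)))"

text \<open>A state is (origin, zs): origin v = None encodes origin \<infinity>, origin v = Some k encodes
  origin k; zs = [Z_0, ..., Z_{count-1}], so count = length zs. The i.i.d. uniform labels
  Z_k are sampled (independently of everything) at the moment the counter reaches k.\<close>
type_synonym 'v dstate = "('v \<Rightarrow> nat option) \<times> sv list"

definition dec_g :: "'v dstate \<Rightarrow> 'v \<Rightarrow> sv" where
  "dec_g st v = (case fst st v of None \<Rightarrow> Bot | Some k \<Rightarrow> snd st ! k)"

definition dec_init :: "'v \<Rightarrow> 'v dstate" where
  "dec_init r = ((\<lambda>v. if v = r then Some 0 else None), [Plus])"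

definition unif_pm :: "sv pmf" where
  "unif_pm = pmf_of_set {Plus, Minus}"

text \<open>Sequential processing of the frontier nodes (listed in processing order);
  ori is origin_t, the state argument is the partially built (origin_{t+1}, zs).\<close>
fun dec_front :: "real \<Rightarrow> ('v \<Rightarrow> 'v) \<Rightarrow> ('v \<Rightarrow> nat option) \<Rightarrow> 'v list \<Rightarrow> 'v dstate \<Rightarrow> 'v dstate pmf" where
  "dec_front \<alpha> p ori [] st = return_pmf st"
| "dec_front \<alpha> p ori (v # vs) (new, zs) =
     bind_pmf (bernoulli_pmf \<alpha>) (\<lambda>c.
       if c then bind_pmf unif_pm (\<lambda>z. dec_front \<alpha> p ori vs (new(v := Some (length zs)), zs @ [z]))
       else dec_front \<alpha> p ori vs (new(v := ori (p v)), zs))"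

text \<open>One step; the frontier {v. g_t v = Bot \<noteq> g_t (p v)} is processed in increasing order of
  the injective key \<sigma>.\<close>
definition dec_step :: "real \<Rightarrow> real \<Rightarrow> 'v \<Rightarrow> ('v \<Rightarrow> 'v) \<Rightarrow> ('v \<Rightarrow> nat) \<Rightarrow> 'v dstate \<Rightarrow> 'v dstate pmf" where
  "dec_step \<alpha> \<beta> r p \<sigma> st =
     (let ori = fst st; zs = snd st; g = dec_g st;
          N = {v. v \<noteq> r \<and> g v \<noteq> Bot};
          F = {v. v \<noteq> r \<and> g v = Bot \<and> g (p v) \<noteq> Bot}
      in bind_pmf (Pi_pmf N None (\<lambda>v. map_pmf (\<lambda>c. if c then ori (p v) else ori v) (bernoulli_pmf \<beta>)))
           (\<lambda>old. dec_front \<alpha> p ori (sorted_key_list_of_set \<sigma> F)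
                    ((\<lambda>v. if v = r then Some 0 else if v \<in> N then old v else None), zs)))"

fun dec_traj :: "real \<Rightarrow> real \<Rightarrow> 'v \<Rightarrow> ('v \<Rightarrow> 'v) \<Rightarrow> ('v \<Rightarrow> nat) \<Rightarrow> nat \<Rightarrow> 'v dstate list pmf" where
  "dec_traj \<alpha> \<beta> r p \<sigma> 0 = return_pmf [dec_init r]"
| "dec_traj \<alpha> \<beta> r p \<sigma> (Suc n) =
     bind_pmf (dec_traj \<alpha> \<beta> r p \<sigma> n)
       (\<lambda>ds. map_pmf (\<lambda>d. ds @ [d]) (dec_step \<alpha> \<beta> r p \<sigma> (last ds)))"

end

theory Submission
  imports Defs
begin


lemma law_eq:
  assumes "0 \<le> a" "a \<le> 1/2" "y \<in> {Plus, Minus}"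
  shows "map_pmf (\<lambda>c. if c then sv_neg y else y) (bernoulli_pmf a)
       = bind_pmf (bernoulli_pmf (2*a)) (\<lambda>c. if c then unif_pm else return_pmf y)"
proof (rule pmf_eqI)
  fix x
  have c: "card {Plus, Minus} = 2" by simp
  show "pmf (map_pmf (\<lambda>c. if c then sv_neg y else y) (bernoulli_pmf a)) x =
        pmf (bind_pmf (bernoulli_pmf (2*a)) (\<lambda>c. if c then unif_pm else return_pmf y)) x"
    using assms unfolding map_pmf_def
    by (cases x; cases y; simp add: pmf_bind unif_pm_def c indicator_def)
qed



lemma dec_g_simp: "dec_g (new, zs) w = (case new w of None \<Rightarrow> Bot | Some k \<Rightarrow> zs ! k)"
  by (simp add: dec_g_def split: option.split)

lemma dec_front_set:
  assumes "st' \<in> set_pmf (dec_front \<alpha> p ori vs (new, zs))"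
  shows "take (length zs) (snd st') = zs \<and> length zs \<le> length (snd st') \<and>
         set (snd st') \<subseteq> set zs \<union> {Plus, Minus} \<and>
         (\<forall>w. w \<notin> set vs \<longrightarrow> fst st' w = new w) \<and>
         (\<forall>w\<in>set vs. fst st' w = ori (p w) \<or> (\<exists>k. fst st' w = Some k \<and> k < length (snd st')))"
  using assms
proof (induction vs arbitrary: new zs)
  case Nil
  then show ?case by auto
next
  case (Cons v vs)
  from Cons.prems obtain c where
    c: "st' \<in> set_pmf (if c then bind_pmf unif_pm (\<lambda>z. dec_front \<alpha> p ori vs (new(v := Some (length zs)), zs @ [z]))
       else dec_front \<alpha> p ori vs (new(v := ori (p v)), zs))"
    by auto
  show ?case
  proof (cases c)
    case True
    with c obtain z where z: "z \<in> {Plus, Minus}"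
      and s: "st' \<in> set_pmf (dec_front \<alpha> p ori vs (new(v := Some (length zs)), zs @ [z]))"
      by (auto simp: unif_pm_def)
    note IH = Cons.IH[OF s]
    have tk: "take (length zs) (snd st') = zs" using IH
      by (metis append_eq_conv_conj length_append_singleton take_take le_add1 min_def Suc_n_not_le_n
          nat_le_linear take_all)
    show ?thesis using IH z tk
      by (auto simp: Suc_le_eq)
  next
    case False
    with c have s: "st' \<in> set_pmf (dec_front \<alpha> p ori vs (new(v := ori (p v)), zs))" by simp
    note IH = Cons.IH[OF s]
    show ?thesis using IH by auto
  qed
qed



definition flaw :: "real \<Rightarrow> ('v \<Rightarrow> sv) \<Rightarrow> 'v \<Rightarrow> sv pmf" where
  "flaw a G v = map_pmf (\<lambda>c. if c then sv_neg (G v) else G v) (bernoulli_pmf a)"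

lemma dec_front_g:
  assumes "distinct vs"
    and "\<forall>v\<in>set vs. \<exists>k. ori (p v) = Some k \<and> k < length zs \<and> zs ! k = G v \<and> G v \<in> {Plus, Minus}"
    and "\<forall>w k. new w = Some k \<longrightarrow> k < length zs"
    and "0 \<le> a" "a \<le> 1/2"
  shows "map_pmf dec_g (dec_front (2*a) p ori vs (new, zs)) =
         map_pmf (\<lambda>h w. if w \<in> set vs then h w else dec_g (new, zs) w) (Pi_pmf (set vs) Bot (flaw a G))"
  using assms(1-3)
proof (induction vs arbitrary: new zs)
  case Nil
  then show ?case by (simp add: fun_eq_iff)
next
  case (Cons v vs)
  obtain k0 where k0: "ori (p v) = Some k0" "k0 < length zs" "zs ! k0 = G v" "G v \<in> {Plus, Minus}"
    using Cons.prems(2) by auto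
  have vn: "v \<notin> set vs" and dvs: "distinct vs" using Cons.prems(1) by auto
  define P where "P = Pi_pmf (set vs) Bot (flaw a G)"
  define g0 where "g0 = dec_g (new, zs)"
  define K where "K y = map_pmf (\<lambda>h w. if w \<in> set vs then h w else if w = v then y else g0 w) P" for y
  have e1: "map_pmf dec_g (dec_front (2*a) p ori vs (new(v := Some (length zs)), zs @ [z])) = K z" for z
  proof -
    have "map_pmf dec_g (dec_front (2*a) p ori vs (new(v := Some (length zs)), zs @ [z])) =
      map_pmf (\<lambda>h w. if w \<in> set vs then h w else dec_g (new(v := Some (length zs)), zs @ [z]) w) P"
      unfolding P_def
      by (rule Cons.IH) (use dvs Cons.prems(2,3) in \<open>auto simp: nth_append less_Suc_eq\<close>)
    moreover have "dec_g (new(v := Some (length zs)), zs @ [z]) = (\<lambda>w. if w = v then z else g0 w)"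
      using Cons.prems(3) by (auto simp: g0_def dec_g_simp nth_append fun_eq_iff split: option.split)
    ultimately show ?thesis by (simp only: K_def)
  qed
  have e0: "map_pmf dec_g (dec_front (2*a) p ori vs (new(v := ori (p v)), zs)) = K (G v)"
  proof -
    have "map_pmf dec_g (dec_front (2*a) p ori vs (new(v := ori (p v)), zs)) =
      map_pmf (\<lambda>h w. if w \<in> set vs then h w else dec_g (new(v := ori (p v)), zs) w) P"
      unfolding P_def
      apply (rule Cons.IH)
      using dvs Cons.prems(2,3) k0 apply auto
      done
    moreover have "dec_g (new(v := ori (p v)), zs) = (\<lambda>w. if w = v then G v else g0 w)"
      using k0 by (auto simp: g0_def dec_g_simp fun_eq_iff)
    ultimately show ?thesis by (simp only: K_def)
  qed
  have "map_pmf dec_g (dec_front (2*a) p ori (v # vs) (new, zs)) =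
     bind_pmf (bernoulli_pmf (2*a)) (\<lambda>c. if c then bind_pmf unif_pm K else K (G v))"
    by (simp add: map_bind_pmf e1 e0 if_distrib cong: if_cong)
  also have "\<dots> = bind_pmf (bind_pmf (bernoulli_pmf (2*a)) (\<lambda>c. if c then unif_pm else return_pmf (G v))) K"
    by (simp add: bind_assoc_pmf bind_return_pmf if_distrib[of "\<lambda>x. bind_pmf x K"] cong: if_cong)
  also have "\<dots> = bind_pmf (flaw a G v) K"
    unfolding flaw_def using law_eq[OF assms(4,5) k0(4)] by simp
  also have "\<dots> = map_pmf (\<lambda>h w. if w \<in> set (v # vs) then h w else g0 w) (Pi_pmf (set (v # vs)) Bot (flaw a G))"
    using vn unfolding K_def P_def
    apply (simp add: Pi_pmf_insert' map_pmf_def bind_assoc_pmf bind_return_pmf)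
    apply (intro bind_pmf_cong refl arg_cong[where f=return_pmf])
    apply (auto simp: fun_eq_iff)
    done
  finally show ?case unfolding g0_def .
qed



definition dinv :: "'v \<Rightarrow> 'v dstate \<Rightarrow> bool" where
  "dinv r st \<longleftrightarrow> fst st r = Some 0 \<and> snd st \<noteq> [] \<and> snd st ! 0 = Plus \<and>
     set (snd st) \<subseteq> {Plus, Minus} \<and> (\<forall>v k. fst st v = Some k \<longrightarrow> k < length (snd st)) \<and>
     finite {v. fst st v \<noteq> None}"

lemma ik: "linorder.insort_key (\<le>) f x xs = insort_key (f :: 'v \<Rightarrow> 'a::linorder) x xs"
  by (induction xs) (simp_all add: linorder.insort_key.simps[OF linorder_class.linorder_axioms])

lemma skl: "linorder.sorted_key_list_of_set (\<le>) = (sorted_key_list_of_set :: ('v\<Rightarrow>'a::linorder) \<Rightarrow> _)"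
  apply (rule ext)+
  apply (simp add: linorder.sorted_key_list_of_set_def[OF linorder_class.linorder_axioms] sorted_key_list_of_set_def ik[abs_def])
  done

lemma skl_props:
  assumes i: "inj (\<sigma>::'v\<Rightarrow>nat)" and f: "finite F"
  shows "set (sorted_key_list_of_set \<sigma> F) = F \<and> distinct (sorted_key_list_of_set \<sigma> F)"
proof -
  interpret folding_insort_key "(\<le>)" "(<)" "UNIV :: 'v set" \<sigma>
    by unfold_locales (use i in \<open>auto intro: inj_on_subset\<close>)
  show ?thesis
    using set_sorted_key_list_of_set[OF subset_UNIV f] distinct_sorted_key_list_of_set[OF subset_UNIV, of F]
    by (simp add: distinct_map skl)
qed

lemma dec_step_props:
  fixes r :: 'v and p :: "'v \<Rightarrow> 'v" and \<sigma> :: "'v \<Rightarrow> nat"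
  assumes chfin: "\<And>u. finite {v. v \<noteq> r \<and> p v = u}" and inj: "inj \<sigma>"
    and a: "0 \<le> a" "a \<le> 1/2" and inv: "dinv r st"
  shows "map_pmf dec_g (dec_step (2*a) b r p \<sigma> st) = spread_step a b r p (dec_g st)
     \<and> (\<forall>st' \<in> set_pmf (dec_step (2*a) b r p \<sigma> st). dinv r st')"
proof -
  obtain ori zs where st: "st = (ori, zs)" by (cases st)
  define g where "g = dec_g st"
  define N where "N = {v. v \<noteq> r \<and> g v \<noteq> Bot}"
  define F where "F = {v. v \<noteq> r \<and> g v = Bot \<and> g (p v) \<noteq> Bot}"
  define oldlaw where "oldlaw v = map_pmf (\<lambda>c. if c then ori (p v) else ori v) (bernoulli_pmf b)" for v
  define init where "init old = (\<lambda>v. if v = r then Some 0 else if v \<in> N then old v else None)" for old :: "'v \<Rightarrow> nat option"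
  define L where "L = sorted_key_list_of_set \<sigma> F"
  define PiN where "PiN = Pi_pmf N None oldlaw"
  define PF where "PF = Pi_pmf F Bot (flaw a (\<lambda>v. g (p v)))"
  define optval where "optval = (\<lambda>x. case x of None \<Rightarrow> Bot | Some k \<Rightarrow> zs ! k)"
  have r0: "ori r = Some 0" and zsne: "zs \<noteq> []" and z0: "zs ! 0 = Plus"
    and zset: "set zs \<subseteq> {Plus, Minus}" and valid: "\<And>v k. ori v = Some k \<Longrightarrow> k < length zs"
    and fin: "finite {v. ori v \<noteq> None}"
    using inv by (auto simp: dinv_def st)
  have gdef: "g v = optval (ori v)" for v by (simp add: g_def st optval_def dec_g_simp)
  have gNone: "g v \<noteq> Bot \<Longrightarrow> ori v \<noteq> None" for v by (auto simp: gdef optval_def split: option.splits)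
  have finN: "finite N"
    by (rule finite_subset[OF _ fin]) (auto simp: N_def dest: gNone)
  have finF: "finite F"
  proof (rule finite_subset)
    show "F \<subseteq> (\<Union>u\<in>{v. ori v \<noteq> None}. {v. v \<noteq> r \<and> p v = u})"
      by (auto simp: F_def dest: gNone)
    show "finite (\<Union>u\<in>{v. ori v \<noteq> None}. {v. v \<noteq> r \<and> p v = u})"
      using fin chfin by blast
  qed
  have setL: "set L = F" and distL: "distinct L" unfolding L_def using skl_props[OF inj finF] by auto
  have step_eq: "dec_step (2*a) b r p \<sigma> st = bind_pmf PiN (\<lambda>old. dec_front (2*a) p ori L (init old, zs))"
    unfolding dec_step_def st Let_def PiN_def oldlaw_def[abs_def] L_def F_def N_def init_def[abs_def] g_def fst_conv snd_conv
    by (rule refl)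
  have setPiN: "old \<in> set_pmf PiN \<Longrightarrow> v \<in> N \<Longrightarrow> old v = ori (p v) \<or> old v = ori v" for old v
    using set_Pi_pmf_subset'[OF finN, of None oldlaw] unfolding PiN_def
    by (auto simp: PiE_dflt_def oldlaw_def)
  have initvalid: "old \<in> set_pmf PiN \<Longrightarrow> init old w = Some k \<Longrightarrow> k < length zs" for old w k
    using setPiN[of old w] valid zsne by (auto simp: init_def split: if_splits)
  have Fpre: "\<forall>v\<in>set L. \<exists>k. ori (p v) = Some k \<and> k < length zs \<and> zs ! k = g (p v) \<and> g (p v) \<in> {Plus, Minus}"
  proof
    fix v assume "v \<in> set L"
    then have "g (p v) \<noteq> Bot" using setL by (auto simp: F_def)
    then obtain k where k: "ori (p v) = Some k" using gNone by blast
    then have "k < length zs" using valid by blast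
    moreover have "zs ! k \<in> {Plus, Minus}" using calculation zset nth_mem by blast
    ultimately show "\<exists>k. ori (p v) = Some k \<and> k < length zs \<and> zs ! k = g (p v) \<and> g (p v) \<in> {Plus, Minus}"
      using k by (auto simp: gdef optval_def)
  qed
  have part1: "map_pmf dec_g (dec_step (2*a) b r p \<sigma> st) =
     bind_pmf PiN (\<lambda>old. map_pmf (\<lambda>h w. if w \<in> F then h w else dec_g (init old, zs) w) PF)"
    unfolding step_eq map_bind_pmf
  proof (intro bind_pmf_cong refl)
    fix old assume old: "old \<in> set_pmf PiN"
    show "map_pmf dec_g (dec_front (2*a) p ori L (init old, zs)) =
          map_pmf (\<lambda>h w. if w \<in> F then h w else dec_g (init old, zs) w) PF"
      unfolding PF_def setL[symmetric]
      apply (rule dec_front_g[where G="\<lambda>v. g (p v)"])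
      using distL Fpre a initvalid[OF old] by auto
  qed
  have Seq: "{v. v \<noteq> r \<and> (g v \<noteq> Bot \<or> g (p v) \<noteq> Bot)} = N \<union> F"
    by (auto simp: N_def F_def)
  have disj: "N \<inter> F = {}" by (auto simp: N_def F_def)
  have optNone: "optval None = Bot" by (simp add: optval_def)
  have PN: "Pi_pmf N Bot (spread_vstep a b p g) = map_pmf (\<lambda>h. optval \<circ> h) PiN"
  proof -
    have "Pi_pmf N Bot (spread_vstep a b p g) = Pi_pmf N Bot (\<lambda>v. map_pmf optval (oldlaw v))"
    proof (rule Pi_pmf_cong[OF refl refl])
      fix v assume "v \<in> N"
      then have "g v \<noteq> Bot" by (simp add: N_def)
      then show "spread_vstep a b p g v = map_pmf optval (oldlaw v)"
        unfolding spread_vstep_def oldlaw_def map_pmf_comp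
        by (simp, intro map_pmf_cong) (auto simp: gdef)
    qed
    also have "\<dots> = map_pmf (\<lambda>h. optval \<circ> h) PiN"
      unfolding PiN_def by (rule Pi_pmf_map[where f=optval and dflt=None, OF finN optNone])
    finally show ?thesis .
  qed
  have PFe: "Pi_pmf F Bot (spread_vstep a b p g) = PF"
    unfolding PF_def
    by (rule Pi_pmf_cong[OF refl refl]) (auto simp: F_def spread_vstep_def flaw_def)
  have setPF: "h \<in> set_pmf PF \<Longrightarrow> x \<notin> F \<Longrightarrow> h x = Bot" for h x
    using set_Pi_pmf_subset[OF finF, of Bot "flaw a (\<lambda>v. g (p v))"] unfolding PF_def by auto
  have dginit: "dec_g (init old, zs) w = (if w = r then Plus else if w \<in> N then optval (old w) else Bot)" for old w
    by (simp add: init_def dec_g_simp z0 optval_def)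
  have part2: "spread_step a b r p g =
     bind_pmf PiN (\<lambda>old. map_pmf (\<lambda>h w. if w \<in> F then h w else dec_g (init old, zs) w) PF)"
  proof -
    have "spread_step a b r p g = map_pmf (\<lambda>h. h(r := Plus))
       (map_pmf (\<lambda>(f,h) x. if x \<in> N then f x else h x)
         (pair_pmf (map_pmf (\<lambda>h. optval \<circ> h) PiN) PF))"
      unfolding spread_step_def Seq Pi_pmf_union[OF finN finF disj] PN PFe ..
    also have "\<dots> = bind_pmf PiN (\<lambda>old. map_pmf (\<lambda>h w. if w \<in> F then h w else dec_g (init old, zs) w) PF)"
      unfolding map_pmf_def pair_pmf_def bind_assoc_pmf bind_return_pmf
    proof (intro bind_pmf_cong refl)
      fix old h assume h: "h \<in> set_pmf PF"
      show "return_pmf ((case (optval \<circ> old, h) of (f, h) \<Rightarrow> \<lambda>x. if x \<in> N then f x else h x)(r := Plus)) =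
            return_pmf (\<lambda>w. if w \<in> F then h w else dec_g (init old, zs) w)"
        using setPF[OF h] disj by (auto simp: fun_eq_iff dginit N_def F_def)
    qed
    finally show ?thesis .
  qed
  have inv': "dinv r st'" if st': "st' \<in> set_pmf (dec_step (2*a) b r p \<sigma> st)" for st'
  proof -
    from st' obtain old where old: "old \<in> set_pmf PiN"
      and s: "st' \<in> set_pmf (dec_front (2*a) p ori L (init old, zs))"
      unfolding step_eq by auto
    note D = dec_front_set[OF s]
    have tk: "take (length zs) (snd st') = zs" and le: "length zs \<le> length (snd st')"
      and ss: "set (snd st') \<subseteq> set zs \<union> {Plus, Minus}"
      and out: "\<And>w. w \<notin> F \<Longrightarrow> fst st' w = init old w"
      and inn: "\<And>w. w \<in> F \<Longrightarrow> fst st' w = ori (p w) \<or> (\<exists>k. fst st' w = Some k \<and> k < length (snd st'))"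
      using D setL by auto
    have rF: "r \<notin> F" by (simp add: F_def)
    have "snd st' ! 0 = zs ! 0"
      using tk zsne by (metis length_greater_0_conv nth_take)
    moreover have "fst st' r = Some 0" using out[OF rF] by (simp add: init_def)
    moreover have "snd st' \<noteq> []" using le zsne by auto
    moreover have "set (snd st') \<subseteq> {Plus, Minus}" using ss zset by auto
    moreover have "\<forall>v k. fst st' v = Some k \<longrightarrow> k < length (snd st')"
    proof (intro allI impI)
      fix v k assume k: "fst st' v = Some k"
      show "k < length (snd st')"
      proof (cases "v \<in> F")
        case True
        then show ?thesis using inn[OF True] k valid le by fastforce
      next
        case False
        then have "init old v = Some k" using out[OF False] k by simp
        then show ?thesis using initvalid[OF old] le by (meson less_le_trans)
      qed
    qed
    moreover have "finite {v. fst st' v \<noteq> None}"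
    proof (rule finite_subset)
      show "{v. fst st' v \<noteq> None} \<subseteq> insert r (N \<union> F)"
        using out by (auto simp: init_def split: if_splits)
      show "finite (insert r (N \<union> F))" using finN finF by simp
    qed
    ultimately show ?thesis by (simp add: dinv_def z0)
  qed
  show ?thesis using part1 part2 inv' by (simp add: g_def)
qed



lemma traj_props:
  fixes r :: 'v and p :: "'v \<Rightarrow> 'v" and \<sigma> :: "'v \<Rightarrow> nat"
  assumes chfin: "\<And>u. finite {v. v \<noteq> r \<and> p v = u}" and inj: "inj \<sigma>"
    and a: "0 \<le> a" "a \<le> 1/2"
  shows "(\<forall>ds \<in> set_pmf (dec_traj (2*a) b r p \<sigma> n). length ds = Suc n \<and> dinv r (last ds)) \<and>
         map_pmf (map dec_g) (dec_traj (2*a) b r p \<sigma> n) = spread_traj a b r p n"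
proof (induction n)
  case 0
  have "dinv r (dec_init r)" by (simp add: dinv_def dec_init_def)
  moreover have "map dec_g [dec_init r] = [spread_init r]"
    by (auto simp: dec_init_def spread_init_def dec_g_def fun_eq_iff)
  ultimately show ?case by simp
next
  case (Suc n)
  note S = dec_step_props[OF chfin inj a]
  have P1: "\<forall>ds \<in> set_pmf (dec_traj (2*a) b r p \<sigma> (Suc n)). length ds = Suc (Suc n) \<and> dinv r (last ds)"
  proof
    fix ds assume "ds \<in> set_pmf (dec_traj (2*a) b r p \<sigma> (Suc n))"
    then obtain ds0 d where ds0: "ds0 \<in> set_pmf (dec_traj (2*a) b r p \<sigma> n)"
      and d: "d \<in> set_pmf (dec_step (2*a) b r p \<sigma> (last ds0))" and e: "ds = ds0 @ [d]" by auto
    have "dinv r (last ds0)" "length ds0 = Suc n" using Suc.IH ds0 by auto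
    then show "length ds = Suc (Suc n) \<and> dinv r (last ds)" using S[of "last ds0" b] d e by auto
  qed
  have "map_pmf (map dec_g) (dec_traj (2*a) b r p \<sigma> (Suc n)) =
     bind_pmf (dec_traj (2*a) b r p \<sigma> n)
       (\<lambda>ds. map_pmf (\<lambda>f. map dec_g ds @ [f]) (map_pmf dec_g (dec_step (2*a) b r p \<sigma> (last ds))))"
    by (simp add: map_bind_pmf map_pmf_comp)
  also have "\<dots> = bind_pmf (dec_traj (2*a) b r p \<sigma> n)
       (\<lambda>ds. (\<lambda>fs. map_pmf (\<lambda>f. fs @ [f]) (spread_step a b r p (last fs))) (map dec_g ds))"
  proof (intro bind_pmf_cong refl)
    fix ds assume ds: "ds \<in> set_pmf (dec_traj (2*a) b r p \<sigma> n)"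
    then have "ds \<noteq> []" "dinv r (last ds)" using Suc.IH by auto
    then show "map_pmf (\<lambda>f. map dec_g ds @ [f]) (map_pmf dec_g (dec_step (2*a) b r p \<sigma> (last ds))) =
      (\<lambda>fs. map_pmf (\<lambda>f. fs @ [f]) (spread_step a b r p (last fs))) (map dec_g ds)"
      using S by (simp add: last_map)
  qed
  also have "\<dots> = bind_pmf (map_pmf (map dec_g) (dec_traj (2*a) b r p \<sigma> n))
       (\<lambda>fs. map_pmf (\<lambda>f. fs @ [f]) (spread_step a b r p (last fs)))"
    by (rule bind_map_pmf[symmetric])
  also have "\<dots> = spread_traj a b r p (Suc n)"
    using Suc.IH by simp
  finally show ?case using P1 by simp
qed

theorem mainTheorem3:
  fixes E :: "'v \<Rightarrow> 'v \<Rightarrow> bool" and r :: 'v and p :: "'v \<Rightarrow> 'v"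
    and \<sigma> :: "'v \<Rightarrow> nat" and a b :: real
  assumes "conn_lf_graph E"
    and "bfs_parent E r p"
    and "inj \<sigma>"
    and "0 \<le> a" and "a \<le> 1/2" and "0 \<le> b" and "b \<le> 1"
  shows "\<forall>n. \<exists>\<mu> :: (('v \<Rightarrow> sv) list \<times> 'v dstate list) pmf.
           map_pmf fst \<mu> = spread_traj a b r p n \<and>
           map_pmf snd \<mu> = dec_traj (2 * a) b r p \<sigma> n \<and>
           (\<forall>(fs, ds) \<in> set_pmf \<mu>. \<forall>t \<le> n. \<forall>v. dec_g (ds ! t) v = (fs ! t) v)"
proof
  fix n
  have chfin: "finite {v. v \<noteq> r \<and> p v = u}" for u
  proof (rule finite_subset)
    show "{v. v \<noteq> r \<and> p v = u} \<subseteq> {w. E u w}"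
      using assms(1,2) unfolding conn_lf_graph_def bfs_parent_def by blast
    show "finite {w. E u w}" using assms(1) unfolding conn_lf_graph_def by blast
  qed
  note T = traj_props[OF chfin assms(3,4,5), of b n]
  define \<mu> where "\<mu> = map_pmf (\<lambda>ds. (map dec_g ds, ds)) (dec_traj (2 * a) b r p \<sigma> n)"
  have "map_pmf fst \<mu> = spread_traj a b r p n"
    using T by (simp add: \<mu>_def map_pmf_comp)
  moreover have "map_pmf snd \<mu> = dec_traj (2 * a) b r p \<sigma> n"
    by (simp add: \<mu>_def map_pmf_comp)
  moreover have "\<forall>(fs, ds) \<in> set_pmf \<mu>. \<forall>t \<le> n. \<forall>v. dec_g (ds ! t) v = (fs ! t) v"
    using T by (auto simp: \<mu>_def)
  ultimately show "\<exists>\<mu> :: (('v \<Rightarrow> sv) list \<times> 'v dstate list) pmf.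
           map_pmf fst \<mu> = spread_traj a b r p n \<and>
           map_pmf snd \<mu> = dec_traj (2 * a) b r p \<sigma> n \<and>
           (\<forall>(fs, ds) \<in> set_pmf \<mu>. \<forall>t \<le> n. \<forall>v. dec_g (ds ! t) v = (fs ! t) v)" by blast
qed

end
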